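(* Let $r_1,r_2,r_3$ be pairwise distinct odd positive integers such that for every $i\in[3]$, $r_i\notin\{1,\lfloor (r_1+r_2+r_3)/2\rfloor,\lceil (r_1+r_2+r_3)/2\rceil\}$. Let $G=K_{r_1,r_2,r_3}$ be the complete 3-partite graph with part sizes $r_1,r_2,r_3$. Then for every bisection $H$ of $G$ there exists a vertex $v\in V(G)$ with $d_H(v)<(d_G(v)-1)/2$.
   Context: A bisection of a graph $G$ is a bipartite spanning subgraph $H$ of $G$ with a bipartition into two partition sets (every edge of $H$ joining the two sets) whose sizes differ by at most one. $d_G(v)$ denotes the degree of $v$ in $G$. *)

theory Defs
  imports Complex_Main
begin

text \<open>Complete multipartite graph with part sizes rs!0, rs!1, ...:
  vertex (i,j) is the j-th vertex of part i.\<close>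
definition cmp_vertices :: "nat list \<Rightarrow> (nat \<times> nat) set" where
  "cmp_vertices rs = {(i, j). i < length rs \<and> j < rs ! i}"

definition cmp_edges :: "nat list \<Rightarrow> (nat \<times> nat) set set" where
  "cmp_edges rs = {{u, v} | u v. u \<in> cmp_vertices rs \<and> v \<in> cmp_vertices rs \<and> fst u \<noteq> fst v}"

definition degree :: "'a set set \<Rightarrow> 'a \<Rightarrow> nat" where
  "degree E v = card {u. {u, v} \<in> E}"

definition is_bisection :: "'a set \<Rightarrow> 'a set set \<Rightarrow> 'a set set \<Rightarrow> bool" where
  "is_bisection V E H \<longleftrightarrow> H \<subseteq> E \<and>
     (\<exists>A B. A \<union> B = V \<and> A \<inter> B = {} \<and>
        (\<forall>e\<in>H. \<exists>a\<in>A. \<exists>b\<in>B. e = {a, b}) \<and>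
        \<bar>int (card A) - int (card B)\<bar> \<le> 1)"

end

theory Submission imports Defs begin

definition part :: "nat list \<Rightarrow> nat \<Rightarrow> (nat \<times> nat) set" where
  "part rs i = {v \<in> cmp_vertices rs. fst v = i}"

lemma part_eq: "i < length rs \<Longrightarrow> part rs i = Pair i ` {..<rs!i}"
  by (auto simp: part_def cmp_vertices_def)

lemma card_part: "i < length rs \<Longrightarrow> card (part rs i) = rs!i"
  by (simp add: part_eq card_image inj_on_def)

lemma V_eq: "cmp_vertices rs = (\<Union>i<length rs. Pair i ` {..<rs!i})"
  by (auto simp: cmp_vertices_def)

lemma finite_V: "finite (cmp_vertices rs)"
  by (simp add: V_eq)

lemma split3:
  assumes "S \<subseteq> cmp_vertices [r1,r2,r3]"
  shows "card S = card (S \<inter> part [r1,r2,r3] 0) + card (S \<inter> part [r1,r2,r3] 1) + card (S \<inter> part [r1,r2,r3] 2)"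
proof -
  let ?P = "part [r1,r2,r3]"
  have fin: "finite S" using assms finite_V finite_subset by blast
  have "S = (S \<inter> ?P 0 \<union> S \<inter> ?P 1) \<union> S \<inter> ?P 2"
    using assms by (auto simp: part_def cmp_vertices_def less_Suc_eq)
  moreover have "card ((S \<inter> ?P 0 \<union> S \<inter> ?P 1) \<union> S \<inter> ?P 2) = card (S \<inter> ?P 0 \<union> S \<inter> ?P 1) + card (S \<inter> ?P 2)"
    by (rule card_Un_disjoint) (use fin in \<open>auto simp: part_def\<close>)
  moreover have "card (S \<inter> ?P 0 \<union> S \<inter> ?P 1) = card (S \<inter> ?P 0) + card (S \<inter> ?P 1)"
    by (rule card_Un_disjoint) (use fin in \<open>auto simp: part_def\<close>)
  ultimately show ?thesis by simp
qed

lemma degG: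
  assumes "v \<in> cmp_vertices rs"
  shows "card (cmp_vertices rs - part rs (fst v)) \<le> degree (cmp_edges rs) v"
  unfolding degree_def
proof (rule card_mono)
  show "finite {u. {u, v} \<in> cmp_edges rs}"
  proof (rule finite_subset[OF _ finite_V[of rs]])
    show "{u. {u, v} \<in> cmp_edges rs} \<subseteq> cmp_vertices rs"
      by (auto simp: cmp_edges_def doubleton_eq_iff)
  qed
  show "cmp_vertices rs - part rs (fst v) \<subseteq> {u. {u, v} \<in> cmp_edges rs}"
  proof
    fix u assume u: "u \<in> cmp_vertices rs - part rs (fst v)"
    then have "u \<in> cmp_vertices rs" "fst u \<noteq> fst v" by (auto simp: part_def)
    then show "u \<in> {u. {u, v} \<in> cmp_edges rs}" using assms unfolding cmp_edges_def by blast
  qed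
qed

lemma degH:
  assumes "H \<subseteq> cmp_edges rs" "A \<inter> B = {}" "finite B"
    "\<forall>e\<in>H. \<exists>a\<in>A. \<exists>b\<in>B. e = {a, b}" "v \<in> A"
  shows "degree H v \<le> card (B - part rs (fst v))"
  unfolding degree_def
proof (rule card_mono)
  show "finite (B - part rs (fst v))" using assms(3) by simp
  show "{u. {u, v} \<in> H} \<subseteq> B - part rs (fst v)"
  proof
    fix u assume "u \<in> {u. {u, v} \<in> H}"
    then have uH: "{u,v} \<in> H" by simp
    then have "{u,v} \<in> cmp_edges rs" using assms(1) by auto
    then have f: "fst u \<noteq> fst v" by (auto simp: cmp_edges_def doubleton_eq_iff)
    obtain a b where ab: "a \<in> A" "b \<in> B" "{u,v} = {a,b}" using assms(4) uH by blast
    have "u \<in> B" using ab assms(2,5) f by (auto simp: doubleton_eq_iff)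
    then show "u \<in> B - part rs (fst v)" using f by (auto simp: part_def)
  qed
qed

lemma part:
  fixes a b r d :: int
  assumes "odd r" "a+b=r" "a\<ge>0" "b\<ge>0" "d=1 \<or> d=-1"
    "a>0 \<Longrightarrow> a-b \<ge> d-1" "b>0 \<Longrightarrow> a-b \<le> d+1"
  shows "a-b = d \<or> a-b = r \<or> a-b = -r"
proof (cases "a>0 \<and> b>0")
  case True
  then have "d-1 \<le> a-b" "a-b \<le> d+1" using assms by auto
  moreover have "odd (a-b)" using assms(1,2) by (metis add_diff_cancel_right' even_add even_diff)
  ultimately show ?thesis using assms(5) by presburger
next
  case False
  then show ?thesis using assms by auto
qed

lemma final:
  fixes x1 x2 x3 r1 r2 r3 d :: int
  assumes "x1 = d \<or> x1 = r1 \<or> x1 = -r1" "x2 = d \<or> x2 = r2 \<or> x2 = -r2" "x3 = d \<or> x3 = r3 \<or> x3 = -r3"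
   "x1+x2+x3 = d" "d=1 \<or> d=-1" "r1 > 0" "r2>0" "r3>0"
   "r1 \<noteq> r2" "r1 \<noteq> r3" "r2 \<noteq> r3" "r1 \<noteq> 1" "r2 \<noteq> 1" "r3 \<noteq> 1"
   "2*r1 \<noteq> r1+r2+r3-1" "2*r2 \<noteq> r1+r2+r3-1" "2*r3 \<noteq> r1+r2+r3-1"
   "2*r1 \<noteq> r1+r2+r3+1" "2*r2 \<noteq> r1+r2+r3+1" "2*r3 \<noteq> r1+r2+r3+1"
  shows False
  using assms by smt

theorem proposition1p2:
  fixes r1 r2 r3 :: nat and H :: "(nat \<times> nat) set set"
  assumes "odd r1" "odd r2" "odd r3"
    and "r1 > 0" "r2 > 0" "r3 > 0"
    and "r1 \<noteq> r2" "r1 \<noteq> r3" "r2 \<noteq> r3"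
    and "\<forall>r\<in>{r1, r2, r3}. r \<notin> {1, (r1 + r2 + r3) div 2, (r1 + r2 + r3 + 1) div 2}"
    and "is_bisection (cmp_vertices [r1, r2, r3]) (cmp_edges [r1, r2, r3]) H"
  shows "\<exists>v\<in>cmp_vertices [r1, r2, r3].
           real (degree H v) < (real (degree (cmp_edges [r1, r2, r3]) v) - 1) / 2"
proof (rule ccontr)
  let ?rs = "[r1, r2, r3]"
  let ?V = "cmp_vertices ?rs"
  let ?E = "cmp_edges ?rs"
  let ?P = "part ?rs"
  define n where "n = r1 + r2 + r3"
  assume "\<not> ?thesis"
  then have hyp: "\<And>v. v \<in> ?V \<Longrightarrow> degree ?E v \<le> 2 * degree H v + 1"
    by (fastforce simp: not_less)
  obtain A B where AB: "A \<union> B = ?V" "A \<inter> B = {}" "\<forall>e\<in>H. \<exists>a\<in>A. \<exists>b\<in>B. e = {a, b}"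
      "\<bar>int (card A) - int (card B)\<bar> \<le> 1" and HE: "H \<subseteq> ?E"
    using assms(11) unfolding is_bisection_def by blast
  have Asub: "A \<subseteq> ?V" and Bsub: "B \<subseteq> ?V" using AB(1) by auto
  have finA: "finite A" and finB: "finite B" using Asub Bsub finite_V finite_subset by blast+
  have cV: "card ?V = n"
    using split3[of ?V r1 r2 r3] card_part[of 0 ?rs] card_part[of 1 ?rs] card_part[of 2 ?rs]
    by (simp add: n_def part_def Int_absorb1)
  have cAB: "card A + card B = n"
    using cV AB(1,2) card_Un_disjoint[OF finA finB] by simp
  define a where "a i = card (A \<inter> ?P i)" for i
  define b where "b i = card (B \<inter> ?P i)" for i
  have ab: "a i + b i = ?rs ! i" if "i < 3" for i
  proof -
    have "?P i = A \<inter> ?P i \<union> B \<inter> ?P i" using AB(1) by (auto simp: part_def)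
    then have "card (?P i) = a i + b i"
      unfolding a_def b_def using finA finB AB(2)
      by (metis card_Un_disjoint finite_Int inf_assoc inf_bot_left inf_left_commute)
    then show ?thesis using card_part[of i ?rs] that by simp
  qed
  have sA: "card A = a 0 + a 1 + a 2" using split3[OF Asub] by (simp add: a_def)
  have sB: "card B = b 0 + b 1 + b 2" using split3[OF Bsub] by (simp add: b_def)
  have cVP: "card (?V - ?P i) = n - ?rs ! i" if "i < 3" for i
    using card_Diff_subset[of "?P i" ?V] cV card_part[of i ?rs] that finite_V
    by (auto simp: part_def finite_subset)
  have keyA: "2 * (card B - b i) + 1 \<ge> n - ?rs ! i" if i3: "i < 3" and pos: "a i > 0" for i
  proof -
    obtain v where v: "v \<in> A \<inter> ?P i" using pos unfolding a_def by (metis card_gt_0_iff ex_in_conv)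
    then have vV: "v \<in> ?V" and fv: "fst v = i" by (auto simp: part_def)
    have "card (B - ?P i) = card B - b i"
      unfolding b_def by (metis Diff_Int2 Diff_Int_distrib2 card_Diff_subset_Int finB finite_Int inf.idem)
    moreover have "degree H v \<le> card (B - ?P (fst v))"
      by (rule degH[OF HE AB(2) finB AB(3)]) (use v in blast)
    ultimately have "degree H v \<le> card B - b i" using fv by simp
    moreover have "n - ?rs ! i \<le> degree ?E v" using degG[OF vV] cVP[OF i3] fv by simp
    ultimately show ?thesis using hyp[OF vV] by linarith
  qed
  have keyB: "2 * (card A - a i) + 1 \<ge> n - ?rs ! i" if i3: "i < 3" and pos: "b i > 0" for i
  proof -
    obtain v where v: "v \<in> B \<inter> ?P i" using pos unfolding b_def by (metis card_gt_0_iff ex_in_conv)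
    then have vV: "v \<in> ?V" and fv: "fst v = i" by (auto simp: part_def)
    have "card (A - ?P i) = card A - a i"
      unfolding a_def by (metis Diff_Int2 Diff_Int_distrib2 card_Diff_subset_Int finA finite_Int inf.idem)
    moreover have "B \<inter> A = {}" using AB(2) by blast
    moreover have "\<forall>e\<in>H. \<exists>a\<in>B. \<exists>b\<in>A. e = {a, b}" using AB(3) by (metis insert_commute)
    moreover have "v \<in> B" using v by blast
    ultimately have "degree H v \<le> card (A - ?P (fst v))"
      using degH[OF HE _ finA] by blast
    with \<open>card (A - ?P i) = card A - a i\<close> have "degree H v \<le> card A - a i" using fv by simp
    moreover have "n - ?rs ! i \<le> degree ?E v" using degG[OF vV] cVP[OF i3] fv by simp
    ultimately show ?thesis using hyp[OF vV] by linarith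
  qed
  define d where "d = int (card A) - int (card B)"
  have nodd: "odd n" using assms(1-3) n_def by simp
  have d1: "d = 1 \<or> d = -1" using AB(4) cAB nodd unfolding d_def by presburger
  have x: "int (a i) - int (b i) = d \<or> int (a i) - int (b i) = int (?rs!i) \<or> int (a i) - int (b i) = - int (?rs!i)"
    if i: "i < 3" for i
  proof (rule part)
    have "i = 0 \<or> i = 1 \<or> i = 2" using i by auto
    then have "odd (?rs ! i)" using assms(1-3) by auto
    then show "odd (int (?rs ! i))" by simp
    show "int (a i) + int (b i) = int (?rs ! i)" using ab[OF i] by simp
    show "d = 1 \<or> d = -1" by (rule d1)
    show "int (a i) - int (b i) \<ge> d - 1" if "int (a i) > 0"
    proof -
      have le1: "b i \<le> card B" unfolding b_def using finB by (simp add: card_mono)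
      have le2: "a i \<le> card A" unfolding a_def using finA by (simp add: card_mono)
      have r: "?rs ! i \<le> n" using le1 le2 ab[OF i] cAB by linarith
      have k: "int (n - ?rs ! i) \<le> 2 * int (card B - b i) + 1" using keyA[OF i] that by simp
      have e1: "int (card B - b i) = int (card B) - int (b i)" using le1 by simp
      have e2: "int (n - ?rs ! i) = int n - int (?rs ! i)" using r by simp
      have e3: "int (a i) + int (b i) = int (?rs ! i)" using ab[OF i] by simp
      have e4: "int (card A) + int (card B) = int n" using cAB by simp
      show ?thesis using k e1 e2 e3 e4 unfolding d_def by linarith
    qed
    show "int (a i) - int (b i) \<le> d + 1" if "int (b i) > 0"
    proof -
      have le1: "a i \<le> card A" unfolding a_def using finA by (simp add: card_mono)
      have le2: "b i \<le> card B" unfolding b_def using finB by (simp add: card_mono)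
      have r: "?rs ! i \<le> n" using le1 le2 ab[OF i] cAB by linarith
      have k: "int (n - ?rs ! i) \<le> 2 * int (card A - a i) + 1" using keyB[OF i] that by simp
      have e1: "int (card A - a i) = int (card A) - int (a i)" using le1 by simp
      have e2: "int (n - ?rs ! i) = int n - int (?rs ! i)" using r by simp
      have e3: "int (a i) + int (b i) = int (?rs ! i)" using ab[OF i] by simp
      have e4: "int (card A) + int (card B) = int n" using cAB by simp
      show ?thesis using k e1 e2 e3 e4 unfolding d_def by linarith
    qed
  qed simp_all
  obtain k where nk: "n = 2*k+1" using nodd by (metis oddE)
  have dv: "n div 2 = k" "(n+1) div 2 = k+1" using nk by simp_all
  have h: "\<forall>r\<in>{r1,r2,r3}. r \<notin> {1, n div 2, (n+1) div 2}" using assms(10) n_def by simp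
  then have hk: "r1 \<noteq> 1" "r2 \<noteq> 1" "r3 \<noteq> 1" "r1 \<noteq> k" "r2 \<noteq> k" "r3 \<noteq> k"
     "r1 \<noteq> k+1" "r2 \<noteq> k+1" "r3 \<noteq> k+1" unfolding dv by auto
  have nk': "int r1 + int r2 + int r3 = 2 * int k + 1" using nk n_def by simp
  have ex: "int r1 \<noteq> 1" "int r2 \<noteq> 1" "int r3 \<noteq> 1"
    "2*int r1 \<noteq> int r1 + int r2 + int r3 - 1" "2*int r2 \<noteq> int r1 + int r2 + int r3 - 1"
    "2*int r3 \<noteq> int r1 + int r2 + int r3 - 1"
    "2*int r1 \<noteq> int r1 + int r2 + int r3 + 1" "2*int r2 \<noteq> int r1 + int r2 + int r3 + 1"
    "2*int r3 \<noteq> int r1 + int r2 + int r3 + 1"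
    using hk nk' by linarith+
  have rr: "int r1 > 0" "int r2 > 0" "int r3 > 0" "int r1 \<noteq> int r2" "int r1 \<noteq> int r3" "int r2 \<noteq> int r3"
    using assms(4-9) by simp_all
  show False
  proof (rule final)
    show "int (a 0) - int (b 0) = d \<or> int (a 0) - int (b 0) = int r1 \<or> int (a 0) - int (b 0) = - int r1"
      using x[of 0] by simp
    show "int (a 1) - int (b 1) = d \<or> int (a 1) - int (b 1) = int r2 \<or> int (a 1) - int (b 1) = - int r2"
      using x[of 1] by simp
    show "int (a 2) - int (b 2) = d \<or> int (a 2) - int (b 2) = int r3 \<or> int (a 2) - int (b 2) = - int r3"
      using x[of 2] by simp
    show "int (a 0) - int (b 0) + (int (a 1) - int (b 1)) + (int (a 2) - int (b 2)) = d"
      using sA sB unfolding d_def by simp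
  qed (fact d1 rr ex)+
qed

end
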